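(* Let $n\ge2$ be an integer and $a>1$. Define $$F_n(t)=\sum_{j>E_{n-1}}\frac{\exp\big(i t\, j^2\,\mathrm{Log}_1 j\cdots\mathrm{Log}_{n-1}j\cdot(\mathrm{Log}_n j)^a\big)}{j\,\mathrm{Log}_1 j\cdots\mathrm{Log}_{n-1}j\cdot(\mathrm{Log}_n j)^a},\qquad t\in\mathbb{R},$$ the sum running over integers $j>E_{n-1}$. Then $F_n$, $\operatorname{Re}F_n$ and $\operatorname{Im}F_n$ are continuous on $\mathbb{R}$ but differentiable at no point of $\mathbb{R}$. (For $n=2$ this is $F_2(t)=\sum_{j\ge3}\exp(it j^2\log j(\log\log j)^a)/(j\log j(\log\log j)^a)$.)
   Context: $\mathrm{Log}_1=\log$ and $\mathrm{Log}_k=\log\circ\mathrm{Log}_{k-1}$ is the $k$-fold iterated natural logarithm. $E_0=1$ and $E_k=\exp(E_{k-1})$, so $E_1=e$, $E_2=e^e$, etc.; $\mathrm{Log}_k t$ is defined and positive for $t>E_{k-1}$. *)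

theory Defs
  imports "HOL-Analysis.Analysis"
begin

primrec iterlog :: "nat \<Rightarrow> real \<Rightarrow> real" where
  "iterlog 0 x = x"
| "iterlog (Suc k) x = ln (iterlog k x)"

primrec Etow :: "nat \<Rightarrow> real" where
  "Etow 0 = 1"
| "Etow (Suc k) = exp (Etow k)"

definition logweight :: "nat \<Rightarrow> real \<Rightarrow> real \<Rightarrow> real" where
  "logweight n a x = (\<Prod>k\<in>{1..n-1}. iterlog k x) * (iterlog n x powr a)"

definition Fser :: "nat \<Rightarrow> real \<Rightarrow> real \<Rightarrow> complex" where
  "Fser n a t = infsum (\<lambda>j::nat.
      cis (t * (real j)^2 * logweight n a (real j)) / complex_of_real (real j * logweight n a (real j)))
      {j. real j > Etow (n - 1)}"

end

theory Submission
  imports Defs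
begin

lemma Etow_ge1: "Etow k \<ge> 1"
  by (induction k) (auto intro: order_trans[OF _ exp_ge_add_one_self] )

lemma Etow_mono_Suc: "Etow k < Etow (Suc k)"
  by (simp add: exp_gt_self)

lemma Etow_mono: "m \<le> k \<Longrightarrow> Etow m \<le> Etow k"
  by (induction k) (auto simp: le_Suc_eq intro: order_trans less_imp_le[OF Etow_mono_Suc])

lemma iterlog_gt: "x > Etow m \<Longrightarrow> k \<le> m \<Longrightarrow> iterlog k x > Etow (m - k)"
proof (induction k)
  case 0 then show ?case by simp
next
  case (Suc k)
  then have "iterlog k x > Etow (m - k)" by simp
  moreover have "m - k = Suc (m - Suc k)" using Suc by simp
  ultimately have "iterlog k x > exp (Etow (m - Suc k))" by simp
  then have "ln (iterlog k x) > Etow (m - Suc k)"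
    by (metis exp_gt_zero exp_less_cancel_iff exp_ln order.strict_trans)
  then show ?case by simp
qed

lemma iterlog_ge: "x \<ge> Etow m \<Longrightarrow> k \<le> m \<Longrightarrow> iterlog k x \<ge> Etow (m - k)"
proof (induction k)
  case 0 then show ?case by simp
next
  case (Suc k)
  then have "iterlog k x \<ge> Etow (m - k)" by simp
  moreover have "m - k = Suc (m - Suc k)" using Suc by simp
  ultimately have "iterlog k x \<ge> exp (Etow (m - Suc k))" by simp
  then have "ln (iterlog k x) \<ge> Etow (m - Suc k)"
    by (metis exp_gt_zero exp_le_cancel_iff exp_ln order.strict_trans2)
  then show ?case by simp
qed

lemma iterlog_pos: "x > Etow m \<Longrightarrow> k \<le> Suc m \<Longrightarrow> iterlog k x > 0"
proof (cases "k = Suc m")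
  case True
  assume x: "x > Etow m"
  have "iterlog m x > Etow 0" using iterlog_gt[OF x, of m] by simp
  then have "iterlog m x > 1" by simp
  then show ?thesis using True by simp
next
  case False
  assume "x > Etow m" "k \<le> Suc m"
  then have "iterlog k x > Etow (m - k)" using iterlog_gt False by simp
  then show ?thesis using Etow_ge1[of "m-k"] by linarith
qed

lemma iterlog_mono: "x > Etow m \<Longrightarrow> x \<le> y \<Longrightarrow> k \<le> Suc m \<Longrightarrow> iterlog k x \<le> iterlog k y"
proof (induction k)
  case 0 then show ?case by simp
next
  case (Suc k)
  then have "iterlog k x \<le> iterlog k y" by simp
  moreover have "iterlog k x > 0" using iterlog_pos Suc by simp
  ultimately show ?case by simp
qed

lemma iterlog_le_ln: "x > Etow m \<Longrightarrow> 1 \<le> k \<Longrightarrow> k \<le> Suc m \<Longrightarrow> iterlog k x \<le> ln x"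
proof (induction k)
  case 0 then show ?case by simp
next
  case (Suc k)
  show ?case
  proof (cases "k = 0")
    case True then show ?thesis by simp
  next
    case False
    then have ih: "iterlog k x \<le> ln x" using Suc by simp
    have "iterlog k x > 0" using iterlog_pos Suc by simp
    then have "ln (iterlog k x) \<le> iterlog k x - 1" using ln_le_minus_one by blast
    then show ?thesis using ih by simp
  qed
qed

lemma iterlog_double:
  assumes y: "y \<ge> Etow m" and k: "1 \<le> k" "k \<le> m"
  shows "iterlog k (2*y) \<le> iterlog k y + ln 2"
  using k
proof (induction k)
  case 0 then show ?case by simp
next
  case (Suc k)
  have ypos: "y > 0" using y Etow_ge1[of m] by linarith
  show ?case
  proof (cases "k = 0")
    case True then show ?thesis using ypos by (simp add: ln_mult)
  next
    case False
    then have ih: "iterlog k (2*y) \<le> iterlog k y + ln 2" using Suc by simp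
    have ge: "iterlog k y \<ge> Etow (m - k)" using iterlog_ge[OF y] Suc by simp
    then have ge1: "iterlog k y \<ge> 1" using Etow_ge1[of "m-k"] by linarith
    have ln2: "ln (2::real) \<le> 1" using ln_le_minus_one[of 2] by simp
    have "iterlog k (2*y) > 0"
    proof -
      have "y > Etow (m - 1)" using y Etow_mono_Suc[of "m-1"] Suc by simp
      then have "iterlog k y \<le> iterlog k (2*y)"
        using iterlog_mono[where x=y and m="m-1" and y="2*y" and k=k] ypos Suc by simp
      then show ?thesis using ge1 by simp
    qed
    then have "ln (iterlog k (2*y)) \<le> ln (2 * iterlog k y)"
      using ih ge1 ln2 by (intro ln_mono) auto
    also have "\<dots> = ln 2 + ln (iterlog k y)" using ge1 by (simp add: ln_mult)
    finally show ?thesis by simp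
  qed
qed


context
  fixes n :: nat and a :: real
  assumes n2: "n \<ge> 2" and a1: "a > 1"
begin

lemma w_factors_pos:
  assumes x: "x > Etow (n-1)" and i: "i \<le> n"
  shows "iterlog i x > 0"
  using iterlog_pos[OF x, of i] i n2 by simp

lemma w_factors_nn:
  assumes x: "x > Etow (n-1)" and i: "i \<le> n - 1"
  shows "iterlog i x \<ge> 0"
proof -
  have "i \<le> n" using i by simp
  then show ?thesis using w_factors_pos[OF x, of i] by simp
qed

lemma w_pos: "x > Etow (n-1) \<Longrightarrow> logweight n a x > 0"
  unfolding logweight_def
  using w_factors_pos[of x n]
  by (intro mult_pos_pos prod_pos) (auto intro: w_factors_pos)

lemma w_mono:
  assumes x: "x > Etow (n-1)" and xy: "x \<le> y"
  shows "logweight n a x \<le> logweight n a y"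
proof -
  have y: "y > Etow (n-1)" using x xy by simp
  have m: "\<And>i. i \<le> n \<Longrightarrow> iterlog i x \<le> iterlog i y"
    using iterlog_mono[OF x xy] n2 by simp
  have p: "(\<Prod>k\<in>{1..n-1}. iterlog k x) \<le> (\<Prod>k\<in>{1..n-1}. iterlog k y)"
    by (intro prod_mono) (auto intro: w_factors_nn[OF x] m)
  have q: "iterlog n x powr a \<le> iterlog n y powr a"
    using m[of n] w_factors_pos[OF x, of n] a1 by (intro powr_mono2) auto
  show ?thesis unfolding logweight_def
    by (intro mult_mono p q) (auto intro!: prod_nonneg w_factors_nn[OF y])
qed

lemma w_double:
  assumes y: "y \<ge> Etow n"
  shows "logweight n a (2*y) \<le> (2^(n-1) * 2 powr a) * logweight n a y"
proof -
  have yE: "y > Etow (n-1)" using y Etow_mono_Suc[of "n-1"] n2 by simp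
  have y2E: "2*y > Etow (n-1)" using yE Etow_ge1[of "n-1"] by simp
  have ln2: "ln (2::real) \<le> 1" using ln_le_minus_one[of 2] by simp
  have d: "iterlog i (2*y) \<le> 2 * iterlog i y" if "1 \<le> i" "i \<le> n" for i
  proof -
    have "iterlog i y \<ge> Etow (n - i)" using iterlog_ge[OF y] that by simp
    then have "iterlog i y \<ge> 1" using Etow_ge1[of "n-i"] by linarith
    then show ?thesis using iterlog_double[OF y that] ln2 by simp
  qed
  have "(\<Prod>k\<in>{1..n-1}. iterlog k (2*y)) \<le> (\<Prod>k\<in>{1..n-1}. 2 * iterlog k y)"
    by (intro prod_mono) (auto intro: w_factors_nn[OF y2E] d)
  also have "\<dots> = 2^(n-1) * (\<Prod>k\<in>{1..n-1}. iterlog k y)"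
    by (simp add: prod.distrib)
  finally have p: "(\<Prod>k\<in>{1..n-1}. iterlog k (2*y)) \<le> 2^(n-1) * (\<Prod>k\<in>{1..n-1}. iterlog k y)" .
  have "iterlog n (2*y) powr a \<le> (2 * iterlog n y) powr a"
    using d[of n] n2 w_factors_pos[OF y2E, of n] a1 by (intro powr_mono2) auto
  also have "\<dots> = 2 powr a * iterlog n y powr a"
    using w_factors_pos[OF yE, of n] by (simp add: powr_mult)
  finally have q: "iterlog n (2*y) powr a \<le> 2 powr a * iterlog n y powr a" .
  have pn: "0 \<le> (\<Prod>k\<in>{1..n-1}. iterlog k y)"
    by (intro prod_nonneg) (auto intro: w_factors_nn[OF yE])
  have "logweight n a (2*y) \<le> (2^(n-1) * (\<Prod>k\<in>{1..n-1}. iterlog k y)) * (2 powr a * iterlog n y powr a)"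
    unfolding logweight_def
    by (intro mult_mono p q) (use pn in \<open>auto intro!: prod_nonneg w_factors_nn[OF y2E]\<close>)
  then show ?thesis unfolding logweight_def by (simp add: algebra_simps)
qed

lemma w_le_lnpowr:
  assumes x: "x > Etow (n-1)"
  shows "logweight n a x \<le> ln x powr (real (n-1) + a)"
proof -
  have x1: "x > 1" using x Etow_ge1[of "n-1"] by linarith
  have le: "iterlog i x \<le> ln x" if "1 \<le> i" "i \<le> n" for i
    using iterlog_le_ln[OF x, of i] that n2 by simp
  have "(\<Prod>k\<in>{1..n-1}. iterlog k x) \<le> (\<Prod>k\<in>{1..n-1}. ln x)"
    by (intro prod_mono) (auto intro: w_factors_nn[OF x] le)
  also have "\<dots> = ln x ^ (n-1)" by simp
  finally have p: "(\<Prod>k\<in>{1..n-1}. iterlog k x) \<le> ln x ^ (n-1)" .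
  have q: "iterlog n x powr a \<le> ln x powr a"
    using le[of n] n2 w_factors_pos[OF x, of n] a1 by (intro powr_mono2) auto
  have "logweight n a x \<le> ln x ^ (n-1) * ln x powr a"
    unfolding logweight_def
    by (intro mult_mono p q) (use x1 in auto)
  also have "\<dots> = ln x powr (real (n-1) + a)"
    using x1 by (simp add: powr_add powr_realpow)
  finally show ?thesis .
qed

end

lemma iterlog_deriv:
  assumes x: "x > Etow m" and k: "k \<le> Suc m"
  shows "(iterlog k has_real_derivative 1 / (\<Prod>i<k. iterlog i x)) (at x)"
  using k
proof (induction k)
  case 0
  have "iterlog 0 = (\<lambda>x. x)" by (rule ext) simp
  then show ?case by (simp add: DERIV_ident)
next
  case (Suc k)
  have f: "iterlog (Suc k) = (\<lambda>x. ln (iterlog k x))" by (rule ext) simp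
  have p: "iterlog k x > 0" using iterlog_pos[OF x] Suc by simp
  have "((\<lambda>x. ln (iterlog k x)) has_real_derivative (1 / iterlog k x) * (1 / (\<Prod>i<k. iterlog i x))) (at x)"
    using DERIV_chain2[OF DERIV_ln_divide[OF p] Suc.IH] Suc by simp
  then show ?case unfolding f by (simp add: field_simps)
qed

lemma aux_alg: fixes a P Q :: real assumes "a > 1"
  shows "- (((1-a) * P) * (1 / Q)) / (a-1) = P / Q"
proof -
  have "- (((1-a) * P) * (1 / Q)) = (a-1) * (P / Q)" by (simp add: algebra_simps diff_divide_distrib add_divide_distrib)
  then show ?thesis using assms by simp
qed

context
  fixes n :: nat and a :: real
  assumes n2: "n \<ge> 2" and a1: "a > 1"
begin

definition GG :: "real \<Rightarrow> real" where
  "GG x = - (iterlog n x powr (1 - a)) / (a - 1)"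

lemma prod_split0: "(\<Prod>i<n. iterlog i x) = x * (\<Prod>i\<in>{1..n-1}. iterlog i x)"
proof -
  have "{..<n} = insert 0 {1..n-1}" using n2 by auto
  then show ?thesis by simp
qed

lemma GG_deriv:
  assumes x: "x > Etow (n-1)"
  shows "(GG has_real_derivative 1 / (x * logweight n a x)) (at x)"
proof -
  have L: "iterlog n x > 0" using w_factors_pos[OF n2 a1 x] by simp
  have d1: "(iterlog n has_real_derivative 1 / (\<Prod>i<n. iterlog i x)) (at x)"
    using iterlog_deriv[OF x] n2 by simp
  have d2: "((\<lambda>x. iterlog n x powr (1-a)) has_real_derivative
      ((1-a) * iterlog n x powr (1-a-1)) * (1 / (\<Prod>i<n. iterlog i x))) (at x)"
    using DERIV_chain2[OF has_real_derivative_powr[OF L] d1] .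
  have d3: "(GG has_real_derivative - (((1-a) * iterlog n x powr (1-a-1)) * (1 / (\<Prod>i<n. iterlog i x))) / (a-1)) (at x)"
    unfolding GG_def using DERIV_cdivide[OF DERIV_minus[OF d2], of "a-1"] by simp
  have "- (((1-a) * iterlog n x powr (1-a-1)) * (1 / (\<Prod>i<n. iterlog i x))) / (a-1)
      = iterlog n x powr (-a) / (\<Prod>i<n. iterlog i x)"
    using aux_alg[OF a1] by simp
  also have "\<dots> = 1 / (x * logweight n a x)"
    unfolding prod_split0 logweight_def using L by (simp add: powr_minus field_simps)
  finally show ?thesis using d3 by simp
qed

lemma GG_nonpos: "GG x \<le> 0"
  unfolding GG_def using a1 by simp

definition cc :: "nat \<Rightarrow> real" where
  "cc j = (if real j > Etow (n-1) then 1 / (real j * logweight n a (real j)) else 0)"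

lemma cc_nonneg: "cc j \<ge> 0"
  unfolding cc_def using w_pos[OF n2 a1, of "real j"] by auto

lemma u_mono:
  assumes x: "x > Etow (n-1)" and xy: "x \<le> y"
  shows "x * logweight n a x \<le> y * logweight n a y"
  using w_mono[OF n2 a1 x xy] w_pos[OF n2 a1 x] x xy Etow_ge1[of "n-1"]
  by (intro mult_mono) auto

lemma cc_le_GG:
  assumes x: "real j - 1 > Etow (n-1)"
  shows "cc j \<le> GG (real j) - GG (real j - 1)"
proof -
  obtain z where z: "real j - 1 < z" "z < real j"
     "GG (real j) - GG (real j - 1) = (real j - (real j - 1)) * (1 / (z * logweight n a z))"
    using MVT2[of "real j - 1" "real j" GG "\<lambda>x. 1 / (x * logweight n a x)"] GG_deriv x by force
  have zE: "z > Etow (n-1)" using z x by simp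
  have zp: "z * logweight n a z > 0" using w_pos[OF n2 a1 zE] zE Etow_ge1[of "n-1"] by simp
  have "z * logweight n a z \<le> real j * logweight n a (real j)" using u_mono[OF zE] z by simp
  then have "1 / (real j * logweight n a (real j)) \<le> 1 / (z * logweight n a z)"
    using zp by (intro divide_left_mono) auto
  then show ?thesis unfolding cc_def using z x by simp
qed

lemma cc_summable: "summable cc"
proof -
  define j1 where "j1 = nat \<lceil>Etow (n-1)\<rceil> + 2"
  have j1: "real (m + j1) - 1 > Etow (n-1)" for m
    unfolding j1_def by linarith
  define h where "h m = GG (real (m + j1) - 1)" for m
  have le: "cc (m + j1) \<le> h (Suc m) - h m" for m
    using cc_le_GG[OF j1[of m]] unfolding h_def by (simp add: add.commute add.left_commute)
  have "(\<Sum>m<N. cc (m + j1)) \<le> - h 0" for N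
  proof -
    have "(\<Sum>m<N. cc (m + j1)) \<le> (\<Sum>m<N. h (Suc m) - h m)" by (intro sum_mono le)
    also have "\<dots> = h N - h 0" by (rule sum_lessThan_telescope)
    also have "\<dots> \<le> - h 0" using GG_nonpos unfolding h_def by simp
    finally show ?thesis .
  qed
  then have "summable (\<lambda>m. cc (m + j1))"
    by (intro summableI_nonneg_bounded[where x="- h 0"] cc_nonneg)
  then show ?thesis by simp
qed

end

lemma ftc_real:
  fixes F f :: "real \<Rightarrow> real"
  assumes "a \<le> b" and "\<And>x. (F has_real_derivative f x) (at x)"
  shows "(f has_integral (F b - F a)) {a..b}"
  using assms
  by (intro fundamental_theorem_of_calculus)
     (auto simp: has_real_derivative_iff_has_vector_derivative[symmetric] intro: has_field_derivative_at_within)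

definition Pv :: "real \<Rightarrow> real \<Rightarrow> real \<Rightarrow> real" where
  "Pv d \<alpha> \<beta> = (if \<alpha> = 0 then d^2 * cos \<beta> else 2 * cos \<beta> * (1 - cos (\<alpha> * d)) / \<alpha>^2)"

lemma cos_pm: "cos (x + b) + cos (- x + b) = 2 * cos b * cos (x::real)"
  by (simp add: cos_add cos_diff)

lemma P_int:
  assumes d: "d \<ge> 0"
  shows "((\<lambda>s. (d - s) * (cos (\<alpha> * s + \<beta>) + cos (- \<alpha> * s + \<beta>))) has_integral Pv d \<alpha> \<beta>) {0..d}"
proof (cases "\<alpha> = 0")
  case True
  define H where "H s = (d * s - s^2 / 2) * (2 * cos \<beta>)" for s
  have "(H has_real_derivative (d - s) * (cos (\<alpha> * s + \<beta>) + cos (- \<alpha> * s + \<beta>))) (at s)" for s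
    unfolding H_def using True by (auto intro!: derivative_eq_intros simp: algebra_simps)
  from ftc_real[OF d this] show ?thesis
    using True unfolding H_def Pv_def by (simp add: power2_eq_square algebra_simps)
next
  case False
  define H where "H s = (d - s) * (sin (\<alpha> * s + \<beta>) - sin (- \<alpha> * s + \<beta>)) / \<alpha>
      - (cos (\<alpha> * s + \<beta>) + cos (- \<alpha> * s + \<beta>)) / \<alpha>^2" for s
  have "(H has_real_derivative (d - s) * (cos (\<alpha> * s + \<beta>) + cos (- \<alpha> * s + \<beta>))) (at s)" for s
    unfolding H_def using False
    by (auto intro!: derivative_eq_intros simp: field_simps power2_eq_square)
  from ftc_real[OF d this] have "((\<lambda>s. (d - s) * (cos (\<alpha> * s + \<beta>) + cos (- \<alpha> * s + \<beta>))) has_integral H d - H 0) {0..d}" .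
  moreover have "H d - H 0 = Pv d \<alpha> \<beta>"
    unfolding H_def Pv_def using False cos_pm[of "\<alpha> * d" \<beta>]
    by (simp add: field_simps power2_eq_square)
  ultimately show ?thesis by simp
qed

lemma P_bound: "\<alpha> \<noteq> 0 \<Longrightarrow> \<bar>Pv d \<alpha> \<beta>\<bar> \<le> 4 / \<alpha>^2"
proof -
  assume a: "\<alpha> \<noteq> 0"
  have "\<bar>2 * cos \<beta> * (1 - cos (\<alpha> * d))\<bar> \<le> 4"
  proof -
    have "\<bar>cos \<beta>\<bar> \<le> 1" by simp
    moreover have "\<bar>1 - cos (\<alpha> * d)\<bar> \<le> 2" using cos_ge_minus_one[of "\<alpha>*d"] cos_le_one[of "\<alpha>*d"] by linarith
    ultimately have "\<bar>cos \<beta>\<bar> * \<bar>1 - cos (\<alpha> * d)\<bar> \<le> 1 * 2" by (intro mult_mono) auto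
    then show ?thesis by (simp add: abs_mult)
  qed
  then show ?thesis using a unfolding Pv_def by (simp add: abs_mult divide_right_mono)
qed

lemma P_zero: "\<alpha> \<noteq> 0 \<Longrightarrow> \<alpha> * d = 2 * pi * real N \<Longrightarrow> Pv d \<alpha> \<beta> = 0"
proof -
  assume "\<alpha> \<noteq> 0" "\<alpha> * d = 2 * pi * real N"
  moreover have "cos (2 * pi * real N) = 1" using cos_2npi[of N] by (simp add: mult.commute mult.left_commute)
  ultimately show ?thesis unfolding Pv_def by simp
qed


lemma sincos_2piN: "sin (2 * pi * real N) = 0" "cos (2 * pi * real N) = 1"
proof -
  have "2 * pi * real N = real (2*N) * pi" by simp
  then show "sin (2 * pi * real N) = 0" by (simp only: sin_npi)
  show "cos (2 * pi * real N) = 1" using cos_2npi[of N] by (simp add: mult.commute mult.left_commute)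
qed

lemma L_int:
  assumes d: "d \<ge> 0" and l: "l \<noteq> 0" and N: "l * d = 2 * pi * real N"
  shows "((\<lambda>s. (d - s) * s * (cos (l * s + p) - cos (- l * s + p))) has_integral 0) {0..d}"
proof -
  define K where "K s = -2 * sin p * (- s * (d - s) * cos (l * s) / l + (d - 2 * s) * sin (l * s) / l^2 - 2 * cos (l * s) / l^3)" for s
  have "(K has_real_derivative (d - s) * s * (-2 * sin (l * s) * sin p)) (at s)" for s
    unfolding K_def using l
    by (auto intro!: derivative_eq_intros simp: field_simps power2_eq_square power3_eq_cube)
  from ftc_real[OF d this] have i: "((\<lambda>s. (d - s) * s * (-2 * sin (l * s) * sin p)) has_integral K d - K 0) {0..d}" .
  have "K d - K 0 = 0" unfolding K_def using sincos_2piN[of N] N l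
    by (simp add: field_simps power3_eq_cube)
  moreover have "(d - s) * s * (-2 * sin (l * s) * sin p) = (d - s) * s * (cos (l * s + p) - cos (- l * s + p))" for s
    by (simp add: cos_add cos_diff)
  ultimately show ?thesis using i by simp
qed

lemma R_int:
  fixes d e :: real
  assumes d: "d \<ge> 0"
  shows "((\<lambda>s. 2 * e * ((d - s) * s)) has_integral e * d^3 / 3) {0..d}"
proof -
  define K where "K s = e * (d * s^2 - 2 * s^3 / 3)" for s
  have "(K has_real_derivative 2 * e * ((d - s) * s)) (at s)" for s
    unfolding K_def by (auto intro!: derivative_eq_intros simp: field_simps power2_eq_square power3_eq_cube)
  from ftc_real[OF d this] show ?thesis unfolding K_def by (simp add: field_simps power2_eq_square power3_eq_cube)
qed

lemma cos_prod_lin: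
  "cos (a1 * s + b1) * cos (a2 * s + b2) = (cos ((a1 - a2) * s + (b1 - b2)) + cos ((a1 + a2) * s + (b1 + b2))) / (2::real)"
proof -
  have "a1 * s + b1 - (a2 * s + b2) = (a1 - a2) * s + (b1 - b2)" "a1 * s + b1 + (a2 * s + b2) = (a1 + a2) * s + (b1 + b2)"
    by (simp_all add: algebra_simps)
  then show ?thesis by (simp only: cos_times_cos)
qed


lemma summable_cos_c:
  fixes c l p :: "nat \<Rightarrow> real"
  assumes c0: "\<And>j. c j \<ge> 0" and cs: "summable c"
  shows "summable (\<lambda>j. c j * cos (l j * x + p j))"
  by (rule summable_comparison_test[OF _ cs]) (auto simp: abs_mult c0 intro!: exI[of _ 0] mult_right_le_one_le)

lemma lin_aux: "(d - s) * ((A + B) / 2 + (C + E) / 2) = 1/2 * ((d - s) * (A + C)) + 1/2 * ((d - s) * (B + E::real))"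
  by (simp add: field_simps)

lemma core:
  fixes c l p B :: "nat \<Rightarrow> real" and f :: "real \<Rightarrow> real" and d e D :: real
  assumes c0: "\<And>j. c j \<ge> 0" and cs: "summable c"
  and f: "\<And>s. f s = (\<Sum>j. c j * cos (l j * s + p j))"
  and d: "d > 0" and lk: "l k > 0" and N: "l k * d = 2 * pi * real N"
  and lnn: "\<And>j. c j \<noteq> 0 \<Longrightarrow> l j \<ge> 0"
  and rem: "\<And>s. \<bar>s\<bar> \<le> d \<Longrightarrow> \<bar>f s - f 0 - D * s\<bar> \<le> e * \<bar>s\<bar>"
  and Bb: "\<And>j. j \<noteq> k \<Longrightarrow> c j \<noteq> 0 \<Longrightarrow> l j \<noteq> l k \<and> c j * (4 / (l j - l k)^2) \<le> B j"
  and B0: "\<And>j. B j \<ge> 0" and Bs: "summable B"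
  shows "c k * d^2 / 2 \<le> e * d^3 / 3 + suminf B"
proof -
  define ck where "ck s = cos (l k * s + p k)" for s
  define \<psi> where "\<psi> j s = (d - s) * (cos (l j * s + p j) * ck s + cos (l j * (-s) + p j) * ck (-s))" for j s
  define Q where "Q j = (1/2) * Pv d (l j - l k) (p j - p k) + (1/2) * Pv d (l j + l k) (p j + p k)" for j
  have \<psi>int: "(\<psi> j has_integral Q j) {0..d}" for j
  proof -
    have eq: "\<psi> j s = (1/2) * ((d - s) * (cos ((l j - l k) * s + (p j - p k)) + cos (- (l j - l k) * s + (p j - p k))))
        + (1/2) * ((d - s) * (cos ((l j + l k) * s + (p j + p k)) + cos (- (l j + l k) * s + (p j + p k))))" for s
    proof -
      have f1: "cos (l j * (-s) + p j) * ck (-s) = (cos (- (l j - l k) * s + (p j - p k)) + cos (- (l j + l k) * s + (p j + p k))) / 2"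
        using cos_prod_lin[of "l j" "-s" "p j" "l k" "p k"] unfolding ck_def by (simp only: mult_minus_right mult_minus_left)
      have f2: "cos (l j * s + p j) * ck s = (cos ((l j - l k) * s + (p j - p k)) + cos ((l j + l k) * s + (p j + p k))) / 2"
        unfolding ck_def by (rule cos_prod_lin)
      show ?thesis unfolding \<psi>_def f1 f2 by (rule lin_aux)
    qed
    have e2: "\<psi> j = (\<lambda>s. (1/2) * ((d - s) * (cos ((l j - l k) * s + (p j - p k)) + cos (- (l j - l k) * s + (p j - p k))))
        + (1/2) * ((d - s) * (cos ((l j + l k) * s + (p j + p k)) + cos (- (l j + l k) * s + (p j + p k)))))"
      using eq by (intro ext)
    show ?thesis unfolding Q_def e2
      by (intro has_integral_add has_integral_mult_right P_int) (use d in auto)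
  qed
  have bnd: "norm (c j * \<psi> j s) \<le> c j * (2 * d)" if "s \<in> {0..d}" for j s
  proof -
    have "\<bar>cos (l j * s + p j) * ck s + cos (l j * (-s) + p j) * ck (-s)\<bar> \<le> 2"
    proof -
      have "\<bar>cos (l j * s + p j) * ck s\<bar> \<le> 1" "\<bar>cos (l j * (-s) + p j) * ck (-s)\<bar> \<le> 1"
        by (auto simp: abs_mult ck_def intro!: mult_le_one)
      then show ?thesis by linarith
    qed
    moreover have "\<bar>d - s\<bar> \<le> d" using that d by auto
    ultimately have "\<bar>\<psi> j s\<bar> \<le> d * 2" unfolding \<psi>_def abs_mult by (intro mult_mono) auto
    then show ?thesis using c0[of j] by (simp add: abs_mult mult_left_mono)
  qed
  have ul: "uniform_limit {0..d} (\<lambda>n s. \<Sum>j<n. c j * \<psi> j s) (\<lambda>s. \<Sum>j. c j * \<psi> j s) sequentially"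
    by (rule Weierstrass_m_test[OF bnd]) (use cs in \<open>auto intro: summable_mult2\<close>)
  have cont: "continuous_on {0..d} (\<lambda>s. \<Sum>j<n. c j * \<psi> j s)" for n
    unfolding \<psi>_def ck_def by (intro continuous_intros)
  obtain I J where I: "\<And>n. ((\<lambda>s. \<Sum>j<n. c j * \<psi> j s) has_integral I n) {0..d}"
    and J: "((\<lambda>s. \<Sum>j. c j * \<psi> j s) has_integral J) {0..d}" and IJ: "I \<longlonglongrightarrow> J"
    using uniform_limit_integral[OF ul cont] by auto
  have Ieq: "I n = (\<Sum>j<n. c j * Q j)" for n
    using has_integral_unique[OF I[of n] has_integral_sum[of "{..<n}" "\<lambda>j s. c j * \<psi> j s" "\<lambda>j. c j * Q j", OF _ has_integral_mult_right[OF \<psi>int]]]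
    by simp
  have "I = (\<lambda>n. \<Sum>j<n. c j * Q j)" using Ieq by (intro ext)
  then have cQ: "(\<lambda>j. c j * Q j) sums J" using IJ unfolding sums_def by simp
  have sumeq: "(\<Sum>j. c j * \<psi> j s) = (d - s) * (f s * ck s + f (-s) * ck (-s))" for s
  proof -
    have s1: "summable (\<lambda>j. c j * cos (l j * s + p j))" "summable (\<lambda>j. c j * cos (l j * (-s) + p j))"
      using summable_cos_c[OF c0 cs, of l s p] summable_cos_c[OF c0 cs, of l "-s" p] by auto
    have "(\<lambda>j. c j * \<psi> j s) = (\<lambda>j. ((d - s) * ck s) * (c j * cos (l j * s + p j)) + ((d - s) * ck (-s)) * (c j * cos (l j * (-s) + p j)))"
      unfolding \<psi>_def by (rule ext) (simp add: algebra_simps)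
    then have "(\<Sum>j. c j * \<psi> j s) = ((d - s) * ck s) * (\<Sum>j. c j * cos (l j * s + p j)) + ((d - s) * ck (-s)) * (\<Sum>j. c j * cos (l j * (-s) + p j))"
      using s1 by (simp add: suminf_add[symmetric] summable_mult suminf_mult)
    then show ?thesis using f[of s] f[of "-s"] by (simp add: algebra_simps)
  qed
  have Phi: "((\<lambda>s. (d - s) * (f s * ck s + f (-s) * ck (-s))) has_integral J) {0..d}"
    using J by (simp add: sumeq)
  have Lam: "((\<lambda>s. (d - s) * ((f 0 + D * s) * ck s + (f 0 + D * (-s)) * ck (-s))) has_integral 0) {0..d}"
  proof -
    have z: "Pv d (l k) (p k) = 0" using P_zero[of "l k" d N] lk N by simp
    have i1: "((\<lambda>s. f 0 * ((d - s) * (cos (l k * s + p k) + cos (- l k * s + p k)))) has_integral 0) {0..d}"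
      using has_integral_mult_right[OF P_int[of d "l k" "p k"], of "f 0"] d z by simp
    have i2: "((\<lambda>s. D * ((d - s) * s * (cos (l k * s + p k) - cos (- l k * s + p k)))) has_integral 0) {0..d}"
      using has_integral_mult_right[OF L_int[of d "l k" N "p k"], of D] d lk N by simp
    have "(\<lambda>s. (d - s) * ((f 0 + D * s) * ck s + (f 0 + D * (-s)) * ck (-s)))
        = (\<lambda>s. f 0 * ((d - s) * (cos (l k * s + p k) + cos (- l k * s + p k))) + D * ((d - s) * s * (cos (l k * s + p k) - cos (- l k * s + p k))))"
      unfolding ck_def by (rule ext) (simp add: algebra_simps)
    then show ?thesis using has_integral_add[OF i1 i2] by simp
  qed
  have Rem: "((\<lambda>s. (d - s) * (f s * ck s + f (-s) * ck (-s)) - (d - s) * ((f 0 + D * s) * ck s + (f 0 + D * (-s)) * ck (-s))) has_integral J) {0..d}"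
    using has_integral_diff[OF Phi Lam] by simp
  have rb: "\<bar>(d - s) * (f s * ck s + f (-s) * ck (-s)) - (d - s) * ((f 0 + D * s) * ck s + (f 0 + D * (-s)) * ck (-s))\<bar> \<le> 2 * e * ((d - s) * s)"
    if s: "s \<in> {0..d}" for s
  proof -
    have r1: "\<bar>f s - f 0 - D * s\<bar> \<le> e * s" using rem[of s] s by auto
    have r2: "\<bar>f (-s) - f 0 - D * (-s)\<bar> \<le> e * s" using rem[of "-s"] s by auto
    have "\<bar>(f s - f 0 - D * s) * ck s\<bar> \<le> e * s" using r1 by (simp add: abs_mult mult_le_one order_trans[OF mult_right_le_one_le] ck_def)
    moreover have "\<bar>(f (-s) - f 0 - D * (-s)) * ck (-s)\<bar> \<le> e * s" using r2 by (simp add: abs_mult ck_def order_trans[OF mult_right_le_one_le])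
    ultimately have hX: "\<bar>(f s - f 0 - D * s) * ck s + (f (-s) - f 0 - D * (-s)) * ck (-s)\<bar> \<le> 2 * e * s" by linarith
    have heq: "(d - s) * (f s * ck s + f (-s) * ck (-s)) - (d - s) * ((f 0 + D * s) * ck s + (f 0 + D * (-s)) * ck (-s))
       = (d - s) * ((f s - f 0 - D * s) * ck s + (f (-s) - f 0 - D * (-s)) * ck (-s))" by (simp add: algebra_simps)
    have hd: "d - s \<ge> 0" using s by auto
    have "\<bar>(d - s) * ((f s - f 0 - D * s) * ck s + (f (-s) - f 0 - D * (-s)) * ck (-s))\<bar>
        = (d - s) * \<bar>(f s - f 0 - D * s) * ck s + (f (-s) - f 0 - D * (-s)) * ck (-s)\<bar>" using hd by (simp add: abs_mult)
    also have "\<dots> \<le> (d - s) * (2 * e * s)" by (rule mult_left_mono[OF hX hd])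
    also have "\<dots> = 2 * e * ((d - s) * s)" by (simp add: algebra_simps)
    finally show ?thesis unfolding heq .
  qed
  have Jb: "\<bar>J\<bar> \<le> e * d^3 / 3"
  proof -
    have "J \<le> e * d^3 / 3" using has_integral_le[OF Rem R_int[of d e]] rb d by fastforce
    moreover have "- J \<le> e * d^3 / 3" using has_integral_le[OF has_integral_neg[OF Rem] R_int[of d e]] rb d by fastforce
    ultimately show ?thesis by linarith
  qed
  have Qk: "Q k = d^2 / 2"
  proof -
    have "Pv d (l k + l k) (p k + p k) = 0" using P_zero[of "l k + l k" d "2*N"] lk N by (simp add: algebra_simps)
    then show ?thesis unfolding Q_def Pv_def by simp
  qed
  define R where "R j = (if j = k then 0 else c j * Q j)" for j
  have Rs: "R sums (J - c k * Q k)"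
  proof -
    have "(\<lambda>j. c j * Q j - (if j = k then c j * Q j else 0)) sums (J - c k * Q k)"
      by (intro sums_diff cQ sums_single)
    moreover have "(\<lambda>j. c j * Q j - (if j = k then c j * Q j else 0)) = R" unfolding R_def by auto
    ultimately show ?thesis by simp
  qed
  have RB: "\<bar>R j\<bar> \<le> B j" for j
  proof (cases "j = k \<or> c j = 0")
    case True then show ?thesis unfolding R_def using B0[of j] by auto
  next
    case False
    then have jk: "j \<noteq> k" and cj: "c j \<noteq> 0" by auto
    from Bb[OF jk cj] have ne: "l j \<noteq> l k" and cb: "c j * (4 / (l j - l k)^2) \<le> B j" by auto
    have a1: "l j - l k \<noteq> 0" using ne by simp
    have lj: "l j \<ge> 0" using lnn[OF cj] .
    have a2: "l j + l k \<noteq> 0" using lj lk by simp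
    have sq: "(l j - l k)^2 \<le> (l j + l k)^2" using lj lk by (simp add: power2_eq_square algebra_simps)
    have pos: "(l j - l k)^2 > 0" using a1 by simp
    have "\<bar>Pv d (l j + l k) (p j + p k)\<bar> \<le> 4 / (l j + l k)^2" by (rule P_bound[OF a2])
    also have "\<dots> \<le> 4 / (l j - l k)^2" using sq pos a2 by (intro divide_left_mono) (auto intro!: mult_pos_pos)
    finally have b2: "\<bar>Pv d (l j + l k) (p j + p k)\<bar> \<le> 4 / (l j - l k)^2" .
    have b1: "\<bar>Pv d (l j - l k) (p j - p k)\<bar> \<le> 4 / (l j - l k)^2" by (rule P_bound[OF a1])
    have "\<bar>Q j\<bar> \<le> 4 / (l j - l k)^2" unfolding Q_def using b1 b2 by (simp add: abs_le_iff) linarith?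
    then have "c j * \<bar>Q j\<bar> \<le> c j * (4 / (l j - l k)^2)" using c0[of j] by (intro mult_left_mono) auto
    then show ?thesis unfolding R_def using jk cb c0[of j] by (simp add: abs_mult)
  qed
  have Bsum: "B sums suminf B" using Bs by (simp add: summable_sums)
  have "J - c k * Q k \<le> suminf B"
    by (rule sums_le[OF _ Rs Bsum]) (use RB in \<open>auto simp: abs_le_iff\<close>)
  moreover have "- suminf B \<le> J - c k * Q k"
  proof (rule sums_le[OF _ sums_minus[OF Bsum] Rs])
    fix j show "- B j \<le> R j" using RB[of j] by linarith
  qed
  ultimately show ?thesis using Jb Qk by (simp add: abs_le_iff)
qed


lemma lnpowr_sqrt:
  fixes x b :: real
  assumes b: "b > 0" and x: "x \<ge> 1"
  shows "ln x powr b \<le> (2*b) powr b * sqrt x"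
proof -
  define \<alpha> where "\<alpha> = 1 / (2*b)"
  have al: "\<alpha> > 0" unfolding \<alpha>_def using b by simp
  have l0: "ln x \<ge> 0" using x by simp
  have "ln x \<le> x powr \<alpha> / \<alpha>" by (rule ln_powr_bound[OF x al])
  then have "ln x powr b \<le> (x powr \<alpha> / \<alpha>) powr b" using l0 b by (intro powr_mono2) auto
  also have "\<dots> = (x powr \<alpha>) powr b / \<alpha> powr b" using al x by (simp add: powr_divide)
  also have "\<dots> = x powr (1/2) * (2*b) powr b" using x b unfolding \<alpha>_def
    by (simp add: powr_powr powr_divide field_simps)
  also have "\<dots> = (2*b) powr b * sqrt x" using x by (simp add: powr_half_sqrt)
  finally show ?thesis .
qed

lemma deriv_rem:
  fixes g :: "real \<Rightarrow> real"
  assumes D: "(g has_real_derivative D) (at t0)" and e: "e > 0"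
  shows "\<exists>d0>0. \<forall>s. \<bar>s\<bar> \<le> d0 \<longrightarrow> \<bar>g (t0 + s) - g t0 - D * s\<bar> \<le> e * \<bar>s\<bar>"
proof -
  have "((\<lambda>y. (g y - g t0) / (y - t0)) \<longlongrightarrow> D) (at t0)" using D has_field_derivative_iff by blast
  from LIM_D[OF this e] obtain r where r: "r > 0"
    "\<And>y. y \<noteq> t0 \<and> norm (y - t0) < r \<longrightarrow> norm ((g y - g t0) / (y - t0) - D) < e" by blast
  have "\<bar>g (t0 + s) - g t0 - D * s\<bar> \<le> e * \<bar>s\<bar>" if s: "\<bar>s\<bar> \<le> r/2" for s
  proof (cases "s = 0")
    case True then show ?thesis by simp
  next
    case False
    have "\<bar>(g (t0 + s) - g t0) / s - D\<bar> < e" using r(2)[of "t0 + s"] s r(1) False by simp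
    moreover have "g (t0 + s) - g t0 - D * s = s * ((g (t0 + s) - g t0) / s - D)" using False by (simp add: field_simps)
    ultimately show ?thesis using False by (simp add: abs_mult mult.commute mult_left_mono)
  qed
  then show ?thesis using r(1) by (intro exI[of _ "r/2"]) auto
qed

definition h1 :: "nat \<Rightarrow> nat \<Rightarrow> real" where
  "h1 k j = (if j < k then 1 / (real k - real j)^2 else 0)"
definition h2 :: "nat \<Rightarrow> nat \<Rightarrow> real" where
  "h2 k j = (if k < j then 1 / (real j - real k)^2 else 0)"

lemma pi_sq6: "pi^2 / 6 \<le> 3"
proof -
  have "pi^2 \<le> 4^2" using pi_less_4 pi_gt_zero by (intro power_mono) auto
  then show ?thesis by simp
qed

lemma h2_sums: "h2 k sums (pi^2/6)"
proof -
  have "(\<lambda>i. h2 k (i + Suc k)) = (\<lambda>n. 1 / (1 + real n)^2)"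
    unfolding h2_def by (rule ext) (simp add: add.commute)
  then have "(\<lambda>i. h2 k (i + Suc k)) sums (pi^2/6)" using inverse_squares_sums by simp
  moreover have "(\<Sum>i<Suc k. h2 k i) = 0" unfolding h2_def by (intro sum.neutral) auto
  ultimately show ?thesis using sums_iff_shift[of "h2 k" "Suc k" "pi^2/6"] by simp
qed

lemma h1_sums: "h1 k sums (\<Sum>i<k. h1 k i)" and h1_le: "(\<Sum>i<k. h1 k i) \<le> pi^2/6"
proof -
  show "h1 k sums (\<Sum>i<k. h1 k i)"
    by (rule sums_finite) (auto simp: h1_def)
  have "(\<Sum>i<k. h1 k i) = (\<Sum>i<k. h1 k (k - Suc i))" by (rule sum.nat_diff_reindex[symmetric])
  also have "\<dots> = (\<Sum>i<k. 1 / (1 + real i)^2)"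
    by (intro sum.cong) (auto simp: h1_def of_nat_diff)
  also have "\<dots> \<le> pi^2/6"
    using sum_le_suminf[OF sums_summable[OF inverse_squares_sums], of "{..<k}"] inverse_squares_sums
    by (simp add: sums_iff)
  finally show "(\<Sum>i<k. h1 k i) \<le> pi^2/6" .
qed

lemma h12_nonneg: "h1 k j \<ge> 0" "h2 k j \<ge> 0"
  unfolding h1_def h2_def by auto


context
  fixes n :: nat and a :: real
  assumes n2: "n \<ge> 2" and a1: "a > 1"
begin

definition lam :: "nat \<Rightarrow> real" where
  "lam j = (real j)^2 * logweight n a (real j)"

lemma norm_term: "norm (complex_of_real (cc n a j) * cis x) = cc n a j"
  using cc_nonneg[OF n2 a1, of j] by (simp add: norm_mult)

lemma summable_cc: "summable (cc n a)" using cc_summable[OF n2 a1] .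

lemma Fser_eq: "Fser n a t = (\<Sum>j. complex_of_real (cc n a j) * cis (t * lam j))"
proof -
  define g where "g j = complex_of_real (cc n a j) * cis (t * lam j)" for j
  have "Fser n a t = infsum g UNIV"
    unfolding Fser_def
  proof (rule infsum_cong_neutral)
    fix x assume "x \<in> UNIV - {j. real j > Etow (n-1)}"
    then show "g x = 0" unfolding g_def by (auto simp: cc_def[OF n2 a1])
  next
    fix x assume "x \<in> {j. real j > Etow (n-1)} - UNIV" then show "cis (t * (real x)\<^sup>2 * logweight n a (real x)) /
         complex_of_real (real x * logweight n a (real x)) = 0" by simp
  next
    fix x assume "x \<in> {j. real j > Etow (n-1)} \<inter> UNIV"
    then show "cis (t * (real x)\<^sup>2 * logweight n a (real x)) /
         complex_of_real (real x * logweight n a (real x)) = g x"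
      unfolding g_def cc_def[OF n2 a1] lam_def by (simp add: divide_inverse mult.commute mult.left_commute of_real_inverse)
  qed
  moreover have ns: "summable (\<lambda>j. norm (g j))" unfolding g_def norm_term by (rule summable_cc)
  have "infsum g UNIV = suminf g"
    by (rule infsumI[OF norm_summable_imp_has_sum[OF ns summable_sums[OF summable_norm_cancel[OF ns]]]])
  ultimately show ?thesis unfolding g_def by simp
qed

lemma summable_term: "summable (\<lambda>j. complex_of_real (cc n a j) * cis (t * lam j))"
  by (rule summable_norm_cancel) (simp add: norm_term summable_cc)

lemma Re_Fser: "Re (Fser n a t) = (\<Sum>j. cc n a j * cos (lam j * t + 0))"
  unfolding Fser_eq Re_suminf[OF summable_term] by (simp add: mult.commute)

lemma Im_Fser: "Im (Fser n a t) = (\<Sum>j. cc n a j * cos (lam j * t + (- (pi/2))))"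
  unfolding Fser_eq Im_suminf[OF summable_term] by (simp add: mult.commute cos_add cos_diff)

lemma Fser_cont: "continuous_on UNIV (Fser n a)"
proof -
  have ul: "uniform_limit UNIV (\<lambda>N t. \<Sum>j<N. complex_of_real (cc n a j) * cis (t * lam j))
       (\<lambda>t. \<Sum>j. complex_of_real (cc n a j) * cis (t * lam j)) sequentially"
    by (rule Weierstrass_m_test) (auto simp: norm_term summable_cc)
  have "continuous_on UNIV (\<lambda>t. \<Sum>j. complex_of_real (cc n a j) * cis (t * lam j))"
    by (rule uniform_limit_theorem[OF _ ul]) (auto intro!: always_eventually continuous_intros)
  moreover have "Fser n a = (\<lambda>t. \<Sum>j. complex_of_real (cc n a j) * cis (t * lam j))"
    by (rule ext) (rule Fser_eq)
  ultimately show ?thesis by simp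
qed

end

lemma div_sq_mono: "0 < (A::real) \<Longrightarrow> A \<le> G \<Longrightarrow> 4 / G^2 \<le> 4 / A^2"
  by (intro divide_left_mono power_mono mult_pos_pos) auto

context
  fixes n :: nat and a :: real
  assumes n2: "n \<ge> 2" and a1: "a > 1"
begin

lemma supp:
  assumes "real j > Etow (n-1)"
  shows "real j > 0" "logweight n a (real j) > 0" "real j * logweight n a (real j) > 0"
    "cc n a j = 1 / (real j * logweight n a (real j))"
    "lam n a j = real j * (real j * logweight n a (real j))"
proof -
  show j0: "real j > 0" using assms Etow_ge1[of "n-1"] by linarith
  show w0: "logweight n a (real j) > 0" using w_pos[OF n2 a1 assms] .
  show "real j * logweight n a (real j) > 0" using j0 w0 by simp
  show "cc n a j = 1 / (real j * logweight n a (real j))" using assms by (simp add: cc_def[OF n2 a1])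
  show "lam n a j = real j * (real j * logweight n a (real j))" by (simp add: lam_def[OF n2 a1] power2_eq_square)
qed

lemma gap_up:
  assumes k: "real k > Etow (n-1)" and kj: "k < j"
  shows "lam n a j - lam n a k \<ge> (real j - real k) * (real k * logweight n a (real k))"
proof -
  have j: "real j > Etow (n-1)" using k kj by simp
  have "real k * logweight n a (real k) \<le> real j * logweight n a (real j)"
    using u_mono[OF n2 a1 k] kj by simp
  then have "real j * (real k * logweight n a (real k)) \<le> real j * (real j * logweight n a (real j))"
    by (intro mult_left_mono) auto
  then show ?thesis unfolding supp(5)[OF j] supp(5)[OF k] by (simp add: algebra_simps)
qed

lemma gap_down:
  assumes j: "real j > Etow (n-1)" and jk: "j < k"
  shows "lam n a k - lam n a j \<ge> (real k - real j) * (real j * logweight n a (real j))"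
proof -
  have k: "real k > Etow (n-1)" using j jk by simp
  have "real j * logweight n a (real j) \<le> real k * logweight n a (real k)"
    using u_mono[OF n2 a1 j] jk by simp
  then have "real k * (real j * logweight n a (real j)) \<le> real k * (real k * logweight n a (real k))"
    by (intro mult_left_mono) auto
  then show ?thesis unfolding supp(5)[OF j] supp(5)[OF k] by (simp add: algebra_simps)
qed

lemma u_double:
  assumes k: "real k / 2 \<ge> Etow n" and jk: "real k / 2 \<le> real j"
  shows "real k * logweight n a (real k) \<le> (2 * (2^(n-1) * 2 powr a)) * (real j * logweight n a (real j))"
proof -
  have En: "Etow (n-1) < Etow n" using Etow_mono_Suc[of "n-1"] n2 by simp
  have k2: "real k / 2 > Etow (n-1)" using k En by simp
  have "logweight n a (real k) = logweight n a (2 * (real k / 2))" by simp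
  also have "\<dots> \<le> (2^(n-1) * 2 powr a) * logweight n a (real k / 2)" by (rule w_double[OF n2 a1 k])
  finally have w1: "logweight n a (real k) \<le> (2^(n-1) * 2 powr a) * logweight n a (real k / 2)" .
  have w2: "logweight n a (real k / 2) \<le> logweight n a (real j)" by (rule w_mono[OF n2 a1 k2 jk])
  have wp: "logweight n a (real k / 2) > 0" by (rule w_pos[OF n2 a1 k2])
  have C0: "2^(n-1) * 2 powr a \<ge> (0::real)" by simp
  have "real k * logweight n a (real k) \<le> real k * ((2^(n-1) * 2 powr a) * logweight n a (real k / 2))"
    by (intro mult_left_mono w1) auto
  also have "\<dots> = (2 * (2^(n-1) * 2 powr a)) * ((real k / 2) * logweight n a (real k / 2))" by (simp add: algebra_simps)
  also have "\<dots> \<le> (2 * (2^(n-1) * 2 powr a)) * (real j * logweight n a (real j))"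
    using jk w2 wp k2 C0 by (intro mult_left_mono mult_mono) auto
  finally show ?thesis .
qed

lemma lam_quarter:
  assumes j: "real j > Etow (n-1)" and jk: "2 * j < k"
  shows "lam n a j \<le> lam n a k / 4"
proof -
  have k: "real k > Etow (n-1)" using j jk by simp
  have w: "logweight n a (real j) \<le> logweight n a (real k)" using w_mono[OF n2 a1 j] jk by simp
  have jj: "real j * real j \<le> (real k / 2) * (real k / 2)" using jk by (intro mult_mono) auto
  have "real j * (real j * logweight n a (real j)) \<le> ((real k / 2) * (real k / 2)) * logweight n a (real k)"
    using mult_mono[OF jj w] supp(2)[OF j] by (simp add: algebra_simps)
  then show ?thesis unfolding supp(5)[OF j] supp(5)[OF k] by (simp add: algebra_simps)
qed

end

context
  fixes n :: nat and a :: real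
  assumes n2: "n \<ge> 2" and a1: "a > 1"
begin

lemma ev_wk: "\<forall>\<^sub>F k in sequentially. 8 * suminf (cc n a) * logweight n a (real k) \<le> real k"
proof -
  define S where "S = suminf (cc n a)"
  have S0: "S \<ge> 0" unfolding S_def using cc_nonneg[OF n2 a1] summable_cc[OF n2 a1] by (simp add: suminf_nonneg)
  define b where "b = real (n-1) + a"
  have b0: "b > 0" unfolding b_def using a1 by simp
  define K where "K = 8 * S * (2*b) powr b"
  have K0: "K \<ge> 0" unfolding K_def using S0 by simp
  have main: "8 * S * logweight n a (real k) \<le> real k" if k: "real k \<ge> Etow (n-1) + 1 + K^2" for k
  proof -
    have "K^2 \<ge> 0" by simp
    then have kE: "real k > Etow (n-1)" using k by linarith
    have k1: "real k \<ge> 1" using kE Etow_ge1[of "n-1"] by simp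
    have "logweight n a (real k) \<le> ln (real k) powr b" unfolding b_def by (rule w_le_lnpowr[OF n2 a1 kE])
    also have "\<dots> \<le> (2*b) powr b * sqrt (real k)" by (rule lnpowr_sqrt[OF b0 k1])
    finally have "8 * S * logweight n a (real k) \<le> 8 * S * ((2*b) powr b * sqrt (real k))"
      using S0 by (intro mult_left_mono) auto
    also have "\<dots> = K * sqrt (real k)" unfolding K_def by simp
    also have "\<dots> \<le> sqrt (real k) * sqrt (real k)"
    proof -
      have "K^2 \<le> real k" using k Etow_ge1[of "n-1"] by linarith
      then have "K \<le> sqrt (real k)" using K0 real_le_rsqrt by blast
      then show ?thesis by (intro mult_right_mono) auto
    qed
    also have "\<dots> = real k" by simp
    finally show ?thesis .
  qed
  then show ?thesis unfolding S_def[symmetric] eventually_sequentially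
  proof (intro exI[of _ "nat \<lceil>Etow (n-1) + 1 + K^2\<rceil>"] allI impI)
    fix m assume "nat \<lceil>Etow (n-1) + 1 + K^2\<rceil> \<le> m"
    then have "real (nat \<lceil>Etow (n-1) + 1 + K^2\<rceil>) \<le> real m" by (rule of_nat_mono)
    then have "Etow (n-1) + 1 + K^2 \<le> real m" using real_nat_ceiling_ge[of "Etow (n-1) + 1 + K^2"] by linarith
    then show "8 * S * logweight n a (real m) \<le> real m" by (rule main)
  qed
qed

lemma nondiff:
  fixes \<psi> t0 :: real
  shows "\<not> ((\<lambda>t. \<Sum>j. cc n a j * cos (lam n a j * t + \<psi>)) differentiable (at t0))"
proof
  define c where "c = cc n a"
  define l where "l = lam n a"
  define w where "w = logweight n a"
  define h where "h t = (\<Sum>j. c j * cos (l j * t + \<psi>))" for t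
  assume "(\<lambda>t. \<Sum>j. cc n a j * cos (lam n a j * t + \<psi>)) differentiable (at t0)"
  then obtain D where D: "(h has_real_derivative D) (at t0)"
    unfolding h_def c_def l_def real_differentiable_def by blast
  have c0: "\<And>j. c j \<ge> 0" unfolding c_def by (rule cc_nonneg[OF n2 a1])
  have cs: "summable c" unfolding c_def by (rule summable_cc[OF n2 a1])
  define S where "S = suminf c"
  have S0: "S \<ge> 0" unfolding S_def using c0 cs by (simp add: suminf_nonneg)
  define C0 where "C0 = (2::real)^(n-1) * 2 powr a"
  have C0: "C0 \<ge> 1"
  proof -
    have "(1::real) * 1 \<le> 2^(n-1) * 2 powr a"
      using ge_one_powr_ge_zero[of 2 a] a1 by (intro mult_mono) auto
    then show ?thesis unfolding C0_def by simp
  qed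
  define C1 where "C1 = (2 * C0)^3"
  have C1: "C1 \<ge> 1"
  proof -
    have "1 \<le> 2 * C0" using C0 by simp
    then show ?thesis unfolding C1_def by (rule one_le_power)
  qed
  define M :: nat where "M = nat \<lceil>24 * C1 + 3\<rceil>"
  have M: "real M \<ge> 24 * C1 + 3" unfolding M_def by linarith
  have Mpos: "real M > 0" using M C1 by linarith
  define e where "e = 3 / (8 * pi^3 * (real M)^3)"
  have e: "e > 0" unfolding e_def using Mpos by simp
  obtain d0 where d0: "d0 > 0" "\<And>s. \<bar>s\<bar> \<le> d0 \<Longrightarrow> \<bar>h (t0 + s) - h t0 - D * s\<bar> \<le> e * \<bar>s\<bar>"
    using deriv_rem[OF D e] by blast
  have ev1: "\<forall>\<^sub>F k in sequentially. real k \<ge> 2 * Etow n"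
    unfolding eventually_sequentially
  proof (intro exI[of _ "nat \<lceil>2 * Etow n\<rceil>"] allI impI)
    fix m assume "nat \<lceil>2 * Etow n\<rceil> \<le> m"
    then have "real (nat \<lceil>2 * Etow n\<rceil>) \<le> real m" by (rule of_nat_mono)
    then show "2 * Etow n \<le> real m" using real_nat_ceiling_ge[of "2 * Etow n"] by linarith
  qed
  have ev2: "\<forall>\<^sub>F k in sequentially. 8 * S * w (real k) \<le> real k"
    unfolding S_def c_def w_def by (rule ev_wk)
  have "c \<longlonglongrightarrow> 0" by (rule summable_LIMSEQ_zero[OF cs])
  then have ev3: "\<forall>\<^sub>F k in sequentially. c k < d0 / (2 * pi * real M)"
    by (rule order_tendstoD) (use d0 Mpos in simp)
  obtain k where k1: "real k \<ge> 2 * Etow n" and k2: "8 * S * w (real k) \<le> real k"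
      and k3: "c k < d0 / (2 * pi * real M)"
    using eventually_happens'[OF _ eventually_conj[OF ev1 eventually_conj[OF ev2 ev3]]] by auto
  have En: "Etow (n-1) < Etow n" using Etow_mono_Suc[of "n-1"] n2 by simp
  have kE: "real k > Etow (n-1)" using k1 En Etow_ge1[of n] by linarith
  note sk = supp[OF n2 a1 kE]
  define u where "u = real k * w (real k)"
  have u0: "u > 0" using sk(3) unfolding u_def w_def .
  define x where "x = c k"
  have x: "x = 1 / u" unfolding x_def c_def u_def w_def using sk(4) .
  have x0: "x > 0" using x u0 by simp
  have lk: "l k = real k * u" unfolding l_def u_def w_def using sk(5) .
  have lk0: "l k > 0" using lk u0 sk(1) by simp
  have lkx: "l k * x = real k" using lk x u0 by simp
  define d where "d = 2 * pi * real M * x"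
  have d: "d > 0" unfolding d_def using Mpos x0 by simp
  have dd0: "d \<le> d0" unfolding d_def using k3 Mpos unfolding x_def by (simp add: field_simps)
  have N: "l k * d = 2 * pi * real (M * k)" unfolding d_def using lkx
    by (simp add: algebra_simps)
  define B where "B j = 8 * c j / (l k)^2 + 4 * C1 * x^3 * (h1 k j + h2 k j)" for j
  have B0: "B j \<ge> 0" for j unfolding B_def using c0[of j] h12_nonneg[of k j] C1 x0 by simp
  have h1s: "summable (h1 k)" using h1_sums by (rule sums_summable)
  have h2s: "summable (h2 k)" using h2_sums by (rule sums_summable)
  have Bs: "summable B" unfolding B_def
    by (intro summable_add summable_mult summable_divide cs summable_add h1s h2s)
  have BS: "suminf B \<le> 8 * S / (l k)^2 + 4 * C1 * x^3 * 6"
  proof -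
    have "B sums (8 * S / (l k)^2 + 4 * C1 * x^3 * (suminf (h1 k) + suminf (h2 k)))"
      unfolding B_def S_def
      by (intro sums_add sums_divide sums_mult summable_sums cs h1s h2s)
    then have "suminf B = 8 * S / (l k)^2 + 4 * C1 * x^3 * (suminf (h1 k) + suminf (h2 k))"
      by (rule sums_unique[symmetric])
    moreover have "suminf (h1 k) + suminf (h2 k) \<le> 6"
      using sums_unique[OF h1_sums[of k]] h1_le[of k] sums_unique[OF h2_sums[of k]] pi_sq6 by linarith
    ultimately show ?thesis using C1 x0 by (simp add: mult_left_mono)
  qed
  define f where "f s = h (t0 + s)" for s
  have f: "f s = (\<Sum>j. c j * cos (l j * s + (l j * t0 + \<psi>)))" for s
  proof -
    have "\<And>j. l j * (t0 + s) + \<psi> = l j * s + (l j * t0 + \<psi>)" by (simp add: algebra_simps)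
    then show ?thesis unfolding f_def h_def by (simp only:)
  qed
  have lnn: "l j \<ge> 0" if "c j \<noteq> 0" for j
  proof -
    have "real j > Etow (n-1)" using that unfolding c_def by (auto simp: cc_def[OF n2 a1] split: if_splits)
    then show ?thesis unfolding l_def using supp(5)[OF n2 a1] supp(3)[OF n2 a1] by (simp add: less_imp_le)
  qed
  have rem: "\<bar>f s - f 0 - D * s\<bar> \<le> e * \<bar>s\<bar>" if "\<bar>s\<bar> \<le> d" for s
    unfolding f_def using d0(2)[of s] that dd0 by simp
  have Bb: "l j \<noteq> l k \<and> c j * (4 / (l j - l k)^2) \<le> B j" if jk: "j \<noteq> k" and cj: "c j \<noteq> 0" for j
  proof -
    have jE: "real j > Etow (n-1)" using cj unfolding c_def by (auto simp: cc_def[OF n2 a1] split: if_splits)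
    note sj = supp[OF n2 a1 jE]
    define v where "v = real j * w (real j)"
    have v0: "v > 0" using sj(3) unfolding v_def w_def .
    have cjv: "c j = 1 / v" unfolding c_def v_def w_def using sj(4) .
    have Bparts: "8 * c j / (l k)^2 \<le> B j" "4 * C1 * x^3 * h1 k j \<le> B j" "4 * C1 * x^3 * h2 k j \<le> B j"
    proof -
      have T0: "4 * C1 * x^3 \<ge> 0" using C1 x0 by simp
      have P0: "8 * c j / (l k)^2 \<ge> 0" using c0[of j] by simp
      have Bexp: "B j = 8 * c j / (l k)^2 + 4 * C1 * x^3 * h1 k j + 4 * C1 * x^3 * h2 k j"
        unfolding B_def by (simp only: distrib_left add.assoc)
      have "4 * C1 * x^3 * h1 k j \<ge> 0" "4 * C1 * x^3 * h2 k j \<ge> 0"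
        using T0 h12_nonneg[of k j] by simp_all
      then show "8 * c j / (l k)^2 \<le> B j" "4 * C1 * x^3 * h1 k j \<le> B j" "4 * C1 * x^3 * h2 k j \<le> B j"
        using Bexp P0 by linarith+
    qed
    consider (up) "k < j" | (near) "j < k" "real k / 2 \<le> real j" | (far) "2 * j < k"
      using jk by linarith
    then show ?thesis
    proof cases
      case up
      have g: "l j - l k \<ge> (real j - real k) * u" using gap_up[OF n2 a1 kE up] unfolding l_def u_def w_def .
      have jk1: "real j - real k > 0" using up by simp
      have gp: "(real j - real k) * u > 0" using jk1 u0 by simp
      have uv: "u \<le> v" using u_mono[OF n2 a1 kE] up unfolding u_def v_def w_def by simp
      have cx: "c j \<le> x" unfolding cjv x using u0 uv by (simp add: frac_le)
      have "c j * (4 / (l j - l k)^2) \<le> x * (4 / ((real j - real k) * u)^2)"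
        using div_sq_mono[OF gp g] cx c0[of j] by (intro mult_mono) auto
      also have "\<dots> = 4 * x^3 * h2 k j" unfolding h2_def x using up u0
        by (simp add: field_simps power2_eq_square power3_eq_cube)
      also have "\<dots> \<le> 4 * C1 * x^3 * h2 k j" using C1 x0 h12_nonneg[of k j] by (simp add: mult_right_mono mult_left_mono)
      finally show ?thesis using Bparts(3) g gp by auto
    next
      case near
      have g: "l k - l j \<ge> (real k - real j) * v" using gap_down[OF n2 a1 jE near(1)] unfolding l_def v_def w_def .
      have jk1: "real k - real j > 0" using near by simp
      have gp: "(real k - real j) * v > 0" using jk1 v0 by simp
      have uv: "u \<le> (2 * C0) * v" using u_double[OF n2 a1 _ near(2)] k1 unfolding u_def v_def w_def C0_def by simp
      have iv: "1 / v \<le> (2 * C0) * x" unfolding x using uv u0 v0 by (simp add: field_simps)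
      have iv3: "(1 / v)^3 \<le> C1 * x^3" unfolding C1_def using power_mono[OF iv, of 3] v0
        by (simp add: power_mult_distrib)
      have "c j * (4 / (l j - l k)^2) = c j * (4 / (l k - l j)^2)" by (simp add: power2_commute)
      also have "\<dots> \<le> (1/v) * (4 / ((real k - real j) * v)^2)"
        using div_sq_mono[OF gp g] cjv c0[of j] by (intro mult_mono) auto
      also have "\<dots> = 4 * (1 / v)^3 * h1 k j" unfolding h1_def using near v0
        by (simp add: field_simps power2_eq_square power3_eq_cube)
      also have "\<dots> \<le> 4 * (C1 * x^3) * h1 k j" using iv3 h12_nonneg[of k j] by (intro mult_right_mono mult_left_mono) auto
      finally show ?thesis using Bparts(2) g gp by (auto simp: algebra_simps)
    next
      case far
      have q: "l j \<le> l k / 4" using lam_quarter[OF n2 a1 jE far] unfolding l_def .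
      have g: "l k - l j \<ge> 3/4 * l k" using q by simp
      have gp: "3/4 * l k > 0" using lk0 by simp
      have "c j * (4 / (l j - l k)^2) = c j * (4 / (l k - l j)^2)" by (simp add: power2_commute)
      also have "\<dots> \<le> c j * (4 / (3/4 * l k)^2)"
        using div_sq_mono[OF gp g] c0[of j] by (intro mult_left_mono) auto
      also have "\<dots> \<le> 8 * c j / (l k)^2" using lk0 c0[of j]
        by (simp add: field_simps power2_eq_square)
      finally show ?thesis using Bparts(1) g gp by auto
    qed
  qed
  have core_ineq: "c k * d^2 / 2 \<le> e * d^3 / 3 + suminf B"
    by (rule core[OF c0 cs f d lk0 N lnn rem Bb B0 Bs]) auto
  have t1: "c k * d^2 / 2 = 2 * pi^2 * (real M)^2 * x^3"
    unfolding d_def x_def by (simp add: power2_eq_square power3_eq_cube)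
  have t2: "e * d^3 / 3 = x^3"
    unfolding d_def e_def using Mpos by (simp add: power3_eq_cube field_simps)
  have t3: "8 * S / (l k)^2 \<le> x^3"
  proof -
    have kw: "8 * S * w (real k) \<le> real k" by (rule k2)
    have "8 * S \<le> real k / w (real k)" using kw sk(2) unfolding w_def by (simp add: field_simps)
    also have "real k / w (real k) = x * (real k)^2" unfolding x u_def using sk(1) sk(2) unfolding w_def
      by (simp add: field_simps power2_eq_square)
    finally have "8 * S \<le> x * (real k)^2" .
    then have "8 * S / (l k)^2 \<le> x * (real k)^2 / (l k)^2" using lk0 by (simp add: divide_right_mono)
    also have "x * (real k)^2 / (l k)^2 = x^3"
    proof -
      have "(real k)^2 = (l k)^2 * x^2" unfolding lkx[symmetric] by (rule power_mult_distrib)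
      then show ?thesis using lk0 by (simp add: power2_eq_square power3_eq_cube)
    qed
    finally show ?thesis .
  qed
  have "2 * pi^2 * (real M)^2 * x^3 \<le> x^3 + x^3 + 24 * C1 * x^3"
    using core_ineq t1 t2 t3 BS by simp
  then have "(2 * pi^2 * (real M)^2) * x^3 \<le> (2 + 24 * C1) * x^3" by (simp add: algebra_simps)
  moreover have "x^3 > 0" using x0 by simp
  ultimately have "2 * pi^2 * (real M)^2 \<le> 2 + 24 * C1" by (simp only: mult_le_cancel_right_pos)
  moreover have "2 * pi^2 * (real M)^2 > 2 + 24 * C1"
  proof -
    have "pi^2 \<ge> 3^2" using pi_gt3 by (intro power_mono) auto
    moreover have "(real M)^2 \<ge> real M" using M C1 by (simp add: power2_eq_square)
    ultimately have "2 * pi^2 * (real M)^2 \<ge> 2 * 9 * real M" using Mpos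
      by (intro mult_mono) auto
    then show ?thesis using M C1 by linarith
  qed
  ultimately show False by linarith
qed

end

theorem mainTheorem12:
  fixes n :: nat and a :: real
  assumes "n \<ge> 2" and "a > 1"
  shows "continuous_on UNIV (Fser n a)
       \<and> continuous_on UNIV (\<lambda>t. Re (Fser n a t))
       \<and> continuous_on UNIV (\<lambda>t. Im (Fser n a t))
       \<and> (\<forall>t::real. \<not> (Fser n a differentiable (at t)))
       \<and> (\<forall>t::real. \<not> ((\<lambda>s. Re (Fser n a s)) differentiable (at t)))
       \<and> (\<forall>t::real. \<not> ((\<lambda>s. Im (Fser n a s)) differentiable (at t)))"
proof -
  note n2 = assms(1) and a1 = assms(2)
  have c: "continuous_on UNIV (Fser n a)" by (rule Fser_cont[OF n2 a1])
  have re: "(\<lambda>s. Re (Fser n a s)) = (\<lambda>t. \<Sum>j. cc n a j * cos (lam n a j * t + 0))"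
    by (rule ext) (rule Re_Fser[OF n2 a1])
  have im: "(\<lambda>s. Im (Fser n a s)) = (\<lambda>t. \<Sum>j. cc n a j * cos (lam n a j * t + (- (pi/2))))"
    by (rule ext) (rule Im_Fser[OF n2 a1])
  have nre: "\<not> ((\<lambda>s. Re (Fser n a s)) differentiable (at t))" for t
    unfolding re by (rule nondiff[OF n2 a1])
  have nim: "\<not> ((\<lambda>s. Im (Fser n a s)) differentiable (at t))" for t
    unfolding im by (rule nondiff[OF n2 a1])
  have nF: "\<not> (Fser n a differentiable (at t))" for t
  proof
    assume "Fser n a differentiable (at t)"
    moreover have "Re differentiable (at (Fser n a t))"
      by (rule bounded_linear_imp_differentiable[OF bounded_linear_Re])
    ultimately have "(Re \<circ> Fser n a) differentiable (at t)"
      by (rule differentiable_chain_at)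
    then show False using nre[of t] by (simp add: o_def)
  qed
  have cre: "continuous_on UNIV (\<lambda>t. Re (Fser n a t))" by (rule continuous_on_Re[OF c])
  have cim: "continuous_on UNIV (\<lambda>t. Im (Fser n a t))" by (rule continuous_on_Im[OF c])
  show ?thesis using c cre cim nre nim nF by blast
qed

end
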